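(* Let $J$ and $K$ be nonempty standard subsets of $\{1,\dots,t\}$ such that for every $i\in K$ we have $i\in J$ or $i-1\in J$. Then $\mathrm{Ext}^1_{\mathcal A_{t,1}}(\Delta(K),\Delta(J))=0$.
   Context: Let $k$ be an algebraically closed field and $t\ge 3$ an integer. $\mathcal A_{t,1}$ is the quotient of the path algebra over $k$ of the quiver with vertices $1,\dots,t$, arrows $\alpha_i:i\to i+1$ ($1\le i\le t-1$) and $\beta_j:j+2\to j$ ($1\le j\le t-2$), by the relations $\beta_1\alpha_2=0$ and $\beta_{i+1}\alpha_{i+2}=\alpha_i\beta_i$ for $1\le i\le t-3$ (compositions of linear maps, written right to left). Modules are finite-dimensional and identified with representations $(M_i;\alpha_i,\beta_j)$ of the quiver satisfying these relations. A subset $J\subseteq\{1,\dots,t\}$ is standard if $j\in J$ implies $j+1\notin J$. For a nonempty standard subset $J$, the standard module $\Delta(J)$ has $\Delta(J)_i=k^{l}$ where $l=\#\{j\in J: j\le i\}$, with standard basis $e_1,\dots,e_l$; each $\alpha_i$ is the natural inclusion $e_h\mapsto e_h$, and each $\beta_j$ sends $e_h\mapsto e_{h-1}$ for $h\ge 2$ and $e_1\mapsto 0$. *)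

theory Defs
  imports "Jordan_Normal_Form.Matrix" "HOL-Computational_Algebra.Polynomial"
begin

text \<open>A finite-dimensional representation of the quiver of A_{t,1} in coordinates:
  dimension vector d (vertex i has space k^(d i), i in 1..t), matrices al i (for alpha_i : i -> i+1)
  and be j (for beta_j : j+2 -> j).\<close>
type_synonym 'a rep = "(nat \<Rightarrow> nat) \<times> (nat \<Rightarrow> 'a mat) \<times> (nat \<Rightarrow> 'a mat)"

definition alg_closed_field :: "'a::field itself \<Rightarrow> bool" where
  "alg_closed_field _ \<longleftrightarrow> (\<forall>p::'a poly. degree p > 0 \<longrightarrow> (\<exists>x. poly p x = 0))"

definition is_rep :: "nat \<Rightarrow> 'a::field rep \<Rightarrow> bool" where
  "is_rep t M \<longleftrightarrow> (case M of (d, al, be) \<Rightarrow>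
     (\<forall>i\<in>{1..t-1}. al i \<in> carrier_mat (d (i+1)) (d i)) \<and>
     (\<forall>j\<in>{1..t-2}. be j \<in> carrier_mat (d j) (d (j+2))) \<and>
     be 1 * al 2 = 0\<^sub>m (d 1) (d 2) \<and>
     (\<forall>i\<in>{1..t-3}. be (i+1) * al (i+2) = al i * be i))"

definition is_hom :: "nat \<Rightarrow> 'a::field rep \<Rightarrow> 'a rep \<Rightarrow> (nat \<Rightarrow> 'a mat) \<Rightarrow> bool" where
  "is_hom t M N f \<longleftrightarrow> (case M of (d, al, be) \<Rightarrow> case N of (d', al', be') \<Rightarrow>
     (\<forall>i\<in>{1..t}. f i \<in> carrier_mat (d' i) (d i)) \<and>
     (\<forall>i\<in>{1..t-1}. f (i+1) * al i = al' i * f i) \<and>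
     (\<forall>j\<in>{1..t-2}. f j * be j = be' j * f (j+2)))"

definition short_exact :: "nat \<Rightarrow> 'a::field rep \<Rightarrow> 'a rep \<Rightarrow> 'a rep
    \<Rightarrow> (nat \<Rightarrow> 'a mat) \<Rightarrow> (nat \<Rightarrow> 'a mat) \<Rightarrow> bool" where
  "short_exact t M E N f g \<longleftrightarrow>
     is_hom t M E f \<and> is_hom t E N g \<and>
     (\<forall>i\<in>{1..t}.
        (\<forall>v\<in>carrier_vec (fst M i). f i *\<^sub>v v = 0\<^sub>v (fst E i) \<longrightarrow> v = 0\<^sub>v (fst M i)) \<and>
        (\<forall>w\<in>carrier_vec (fst N i). \<exists>v\<in>carrier_vec (fst E i). g i *\<^sub>v v = w) \<and>
        (\<forall>v\<in>carrier_vec (fst E i).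
           g i *\<^sub>v v = 0\<^sub>v (fst N i) \<longleftrightarrow> (\<exists>u\<in>carrier_vec (fst M i). f i *\<^sub>v u = v)))"

text \<open>Ext^1(N, M) = 0: every short exact sequence 0 -> M -> E -> N -> 0 of representations splits
  (g has a section which is a homomorphism). Every finite-dimensional module is isomorphic to a
  coordinate representation, so quantifying over coordinate representations E suffices.\<close>
definition ext1_zero :: "nat \<Rightarrow> 'a::field rep \<Rightarrow> 'a rep \<Rightarrow> bool" where
  "ext1_zero t N M \<longleftrightarrow>
     (\<forall>E f g. is_rep t E \<and> short_exact t M E N f g \<longrightarrow>
        (\<exists>s. is_hom t N E s \<and> (\<forall>i\<in>{1..t}. g i * s i = 1\<^sub>m (fst N i))))"

definition standard_subset :: "nat \<Rightarrow> nat set \<Rightarrow> bool" where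
  "standard_subset t J \<longleftrightarrow> J \<subseteq> {1..t} \<and> (\<forall>j\<in>J. j + 1 \<notin> J)"

text \<open>Standard module Delta(J): dimension l_i = #{j in J. j <= i}; basis e_1..e_l is indexed 0..l-1.
  alpha_i is the natural inclusion, beta_j sends e_h to e_(h-1) (e_1 to 0).\<close>
definition std_dim :: "nat set \<Rightarrow> nat \<Rightarrow> nat" where
  "std_dim J i = card {j\<in>J. j \<le> i}"

definition std_module :: "nat set \<Rightarrow> 'a::field rep" where
  "std_module J = (std_dim J,
     (\<lambda>i. mat (std_dim J (i+1)) (std_dim J i) (\<lambda>(r,c). if r = c then 1 else 0)),
     (\<lambda>j. mat (std_dim J j) (std_dim J (j+2)) (\<lambda>(r,c). if c = r + 1 then 1 else 0)))"

end

theory Submission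
  imports Defs
begin

lemma sd_Suc: "std_dim J (Suc i) = std_dim J i + (if Suc i \<in> J then 1 else 0)"
proof -
  have "{j\<in>J. j \<le> Suc i} = (if Suc i \<in> J then insert (Suc i) {j\<in>J. j \<le> i} else {j\<in>J. j \<le> i})"
    by (auto simp: le_Suc_eq)
  then show ?thesis unfolding std_dim_def by auto
qed

lemma sd_0: "0 \<notin> J \<Longrightarrow> std_dim J 0 = 0"
  unfolding std_dim_def by auto

lemma sd_mono: "i \<le> j \<Longrightarrow> std_dim J i \<le> std_dim J j"
  unfolding std_dim_def by (rule card_mono) auto

lemma sd_two: assumes "\<forall>j\<in>J. j+1 \<notin> J" shows "std_dim J (i+2) \<le> std_dim J i + 1"
  using sd_Suc[of J "Suc i"] sd_Suc[of J i] assms by auto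

lemma sd_two_ge: assumes "i+2 \<in> J \<or> i+1 \<in> J" shows "std_dim J i + 1 \<le> std_dim J (i+2)"
  using sd_Suc[of J "Suc i"] sd_Suc[of J i] assms by auto

definition inc :: "(nat \<Rightarrow> nat) \<Rightarrow> nat \<Rightarrow> 'a::field mat" where
  "inc D i = mat (D (i+1)) (D i) (\<lambda>(r,c). if r = c then 1 else 0)"

definition sh :: "(nat \<Rightarrow> nat) \<Rightarrow> nat \<Rightarrow> 'a::field mat" where
  "sh D j = mat (D j) (D (j+2)) (\<lambda>(r,c). if c = r + 1 then 1 else 0)"

lemma std_module_eq: "std_module J = (std_dim J, inc (std_dim J), sh (std_dim J))"
  unfolding std_module_def by (auto intro!: ext simp: inc_def sh_def)

lemma inc_car: "inc D i \<in> carrier_mat (D (i+1)) (D i)" by (simp add: inc_def)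
lemma sh_car: "sh D i \<in> carrier_mat (D i) (D (i+2))" by (simp add: sh_def)

lemma col_inc: "c < D i \<Longrightarrow> col (inc D i) c = unit_vec (D (i+1)) c"
  by (auto simp: inc_def unit_vec_def)

lemma col_sh: "c < D (j+2) \<Longrightarrow> col (sh D j) c = (if c = 0 then 0\<^sub>v (D j) else unit_vec (D j) (c-1))"
  by (rule eq_vecI) (auto simp: sh_def unit_vec_def)

lemma inc_unit: "c < D i \<Longrightarrow> c < D (i+1) \<Longrightarrow> (inc D i :: 'a::field mat) *\<^sub>v unit_vec (D i) c = unit_vec (D (i+1)) c"
  by (rule eq_vecI) (auto simp: inc_def)

lemma sh_unit: "c < D (j+2) \<Longrightarrow> D (j+2) \<le> D j + 1 \<Longrightarrow>
   (sh D j :: 'a::field mat) *\<^sub>v unit_vec (D (j+2)) c = (if c = 0 then 0\<^sub>v (D j) else unit_vec (D j) (c-1))"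
  by (rule eq_vecI) (auto simp: sh_def)

lemma sh_surj: assumes "D j + 1 \<le> D (j+2)" "u \<in> carrier_vec (D j)"
  shows "(sh D j :: 'a::field mat) *\<^sub>v vec (D (j+2)) (\<lambda>r. if r = 0 then 0 else if r - 1 < D j then u $ (r-1) else 0) = u"
proof (rule eq_vecI)
  let ?v = "vec (D (j+2)) (\<lambda>r. if r = 0 then 0 else if r - 1 < D j then u $ (r-1) else 0)"
  fix r assume r: "r < dim_vec u"
  then have r': "r < D j" using assms by auto
  have rw: "row (sh D j) r = unit_vec (D (j+2)) (r+1)"
    using r' by (auto simp: sh_def unit_vec_def)
  have "(sh D j *\<^sub>v ?v) $ r = row (sh D j) r \<bullet> ?v" using r' by (simp add: sh_def)
  also have "\<dots> = unit_vec (D (j+2)) (r+1) \<bullet> ?v" by (simp only: rw)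
  also have "\<dots> = ?v $ (r+1)" using r' assms by (intro scalar_prod_left_unit) auto
  also have "\<dots> = u $ r" using r' assms by auto
  finally show "(sh D j *\<^sub>v ?v) $ r = u $ r" .
qed (use assms in \<open>auto simp: sh_def\<close>)

lemma cols_unit: assumes "\<And>c. c < m \<Longrightarrow> Y c \<in> carrier_vec n" "c < m"
  shows "mat n m (\<lambda>(r,c). Y c $ r) *\<^sub>v unit_vec m c = (Y c :: 'a::field vec)"
proof -
  have "Y c \<in> carrier_vec n" using assms by auto
  then show ?thesis using assms(2) by (intro eq_vecI) auto
qed

lemma cols_col: assumes "\<And>c. c < m \<Longrightarrow> Y c \<in> carrier_vec n" "c < m"
  shows "col (mat n m (\<lambda>(r,c). Y c $ r)) c = (Y c :: 'a::field vec)"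
proof -
  have "Y c \<in> carrier_vec n" using assms by auto
  then show ?thesis using assms(2) by (intro eq_vecI) auto
qed

lemma mat_zero_vec: "A \<in> carrier_mat nr nc \<Longrightarrow> A *\<^sub>v 0\<^sub>v nc = (0\<^sub>v nr :: 'a::field vec)"
  by (intro eq_vecI) auto


primrec itv :: "(nat \<Rightarrow> 'a::field mat) \<Rightarrow> nat \<Rightarrow> 'a vec \<Rightarrow> nat \<Rightarrow> 'a vec" where
  "itv A k z 0 = z"
| "itv A k z (Suc d) = A (k + d) *\<^sub>v itv A k z d"

locale ctx =
  fixes t :: nat and J K :: "nat set" and dE :: "nat \<Rightarrow> nat"
    and aE bE f g :: "nat \<Rightarrow> 'a::field mat"
  assumes t3: "t \<ge> 3" and sJ: "standard_subset t J" and sK: "standard_subset t K"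
    and cond: "\<forall>i\<in>K. i \<in> J \<or> i - 1 \<in> J"
    and rep: "is_rep t (dE, aE, bE)"
    and ses: "short_exact t (std_module J :: 'a rep) (dE, aE, bE) (std_module K) f g"
begin

abbreviation "dJ \<equiv> std_dim J"
abbreviation "dK \<equiv> std_dim K"

lemma aE_car: "i \<in> {1..t-1} \<Longrightarrow> aE i \<in> carrier_mat (dE (i+1)) (dE i)"
  using rep by (simp add: is_rep_def)
lemma bE_car: "j \<in> {1..t-2} \<Longrightarrow> bE j \<in> carrier_mat (dE j) (dE (j+2))"
  using rep by (simp add: is_rep_def)
lemma rel1: "bE 1 * aE 2 = 0\<^sub>m (dE 1) (dE 2)"
  using rep by (simp add: is_rep_def)
lemma rel2: "i \<in> {1..t-3} \<Longrightarrow> bE (i+1) * aE (i+2) = aE i * bE i"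
  using rep by (simp add: is_rep_def)

lemma homf: "is_hom t (dJ, inc dJ, sh dJ) (dE, aE, bE) f"
  using ses by (simp add: short_exact_def std_module_eq)
lemma homg: "is_hom t (dE, aE, bE) (dK, inc dK, sh dK) g"
  using ses by (simp add: short_exact_def std_module_eq)

lemma f_car: "i \<in> {1..t} \<Longrightarrow> f i \<in> carrier_mat (dE i) (dJ i)"
  using homf by (simp add: is_hom_def)
lemma g_car: "i \<in> {1..t} \<Longrightarrow> g i \<in> carrier_mat (dK i) (dE i)"
  using homg by (simp add: is_hom_def)
lemma f_b: "j \<in> {1..t-2} \<Longrightarrow> f j * sh dJ j = bE j * f (j+2)"
  using homf by (simp add: is_hom_def)
lemma g_a: "i \<in> {1..t-1} \<Longrightarrow> g (i+1) * aE i = inc dK i * g i"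
  using homg by (simp add: is_hom_def)
lemma g_b: "j \<in> {1..t-2} \<Longrightarrow> g j * bE j = sh dK j * g (j+2)"
  using homg by (simp add: is_hom_def)

lemma g_surj: "i \<in> {1..t} \<Longrightarrow> w \<in> carrier_vec (dK i) \<Longrightarrow> \<exists>v\<in>carrier_vec (dE i). g i *\<^sub>v v = w"
  using ses by (simp add: short_exact_def std_module_eq)
lemma exact: "i \<in> {1..t} \<Longrightarrow> v \<in> carrier_vec (dE i) \<Longrightarrow> g i *\<^sub>v v = 0\<^sub>v (dK i)
   \<Longrightarrow> \<exists>u\<in>carrier_vec (dJ i). f i *\<^sub>v u = v"
  using ses by (simp add: short_exact_def std_module_eq)
lemma gf: "i \<in> {1..t} \<Longrightarrow> u \<in> carrier_vec (dJ i) \<Longrightarrow> g i *\<^sub>v (f i *\<^sub>v u) = 0\<^sub>v (dK i)"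
proof -
  assume i: "i \<in> {1..t}" and u: "u \<in> carrier_vec (dJ i)"
  have "f i *\<^sub>v u \<in> carrier_vec (dE i)" using f_car[OF i] u by simp
  then show ?thesis using ses i u unfolding short_exact_def std_module_eq by auto
qed

lemma J0: "0 \<notin> J" using sJ by (auto simp: standard_subset_def)
lemma K0: "0 \<notin> K" using sK by (auto simp: standard_subset_def)
lemma Jst: "\<forall>j\<in>J. j+1 \<notin> J" using sJ by (auto simp: standard_subset_def)
lemma Kst: "\<forall>j\<in>K. j+1 \<notin> K" using sK by (auto simp: standard_subset_def)

definition good :: "(nat \<Rightarrow> nat \<Rightarrow> 'a vec) \<Rightarrow> nat \<Rightarrow> bool" where
  "good Y c \<longleftrightarrow> (\<forall>i\<in>{1..t}. c < dK i \<longrightarrow>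
     Y c i \<in> carrier_vec (dE i) \<and> g i *\<^sub>v Y c i = unit_vec (dK i) c \<and>
     (i < t \<longrightarrow> aE i *\<^sub>v Y c i = Y c (i+1)) \<and>
     (3 \<le> i \<longrightarrow> bE (i-2) *\<^sub>v Y c i = (if c = 0 then 0\<^sub>v (dE (i-2)) else Y (c-1) (i-2))))"

lemma good_upd: "c < n \<Longrightarrow> good Y c \<Longrightarrow> good (Y(n := W)) c"
  unfolding good_def by auto

lemma zero_mat_vec: "v \<in> carrier_vec nc \<Longrightarrow> 0\<^sub>m nr nc *\<^sub>v v = (0\<^sub>v nr :: 'a vec)"
  by (intro eq_vecI) auto

lemma step:
  assumes all: "\<forall>c<n. good Y c" and n: "n < dK t"
  shows "\<exists>W. good (Y(n := W)) n"
proof -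
  define k where "k = (LEAST i. n < dK i)"
  have nk: "n < dK k" using LeastI[of "\<lambda>i. n < dK i" t] n k_def by auto
  have kt: "k \<le> t" using Least_le[of "\<lambda>i. n < dK i" t] n k_def by auto
  have k1: "k \<ge> 1"
  proof (rule ccontr)
    assume "\<not> k \<ge> 1" then have "k = 0" by simp
    then show False using nk sd_0[OF K0] by simp
  qed
  have below: "dK (k-1) \<le> n" using not_less_Least[of "k-1" "\<lambda>i. n < dK i"] k1 k_def by fastforce
  have sk: "dK k = dK (k-1) + (if k \<in> K then 1 else 0)" using sd_Suc[of K "k-1"] k1 by simp
  have dkk: "dK k = n+1" and kK: "k \<in> K" using sk below nk by (auto split: if_splits)
  have above: "\<And>i. k \<le> i \<Longrightarrow> n < dK i" using nk sd_mono[of k _ K] by (meson less_le_trans)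
  have leastk: "\<And>i. n < dK i \<Longrightarrow> k \<le> i" unfolding k_def by (rule Least_le)
  have n1k3: "n \<ge> 1 \<Longrightarrow> k \<ge> 3"
  proof (rule ccontr)
    assume "n \<ge> 1" "\<not> k \<ge> 3"
    then have "dK k \<le> dK 2" by (intro sd_mono) auto
    also have "\<dots> \<le> dK 0 + 1" using sd_two[OF Kst, of 0] by (simp add: numeral_2_eq_2)
    finally show False using dkk \<open>n \<ge> 1\<close> sd_0[OF K0] by simp
  qed
  have dK2: "k \<ge> 3 \<Longrightarrow> dK (k-2) = n"
  proof -
    assume k3: "k \<ge> 3"
    have "k - 1 \<notin> K"
    proof
      assume "k - 1 \<in> K"
      then have "(k-1)+1 \<notin> K" using Kst by blast
      then show False using kK k3 by simp
    qed
    moreover have "dK (k-1) = dK (k-2) + (if k - 1 \<in> K then 1 else 0)" using sd_Suc[of K "k-2"] k3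
      by (simp add: Suc_diff_Suc numeral_2_eq_2)
    ultimately show ?thesis using below dkk sk kK by simp
  qed
  have dJ2: "k \<ge> 3 \<Longrightarrow> dJ (k-2) + 1 \<le> dJ ((k-2)+2)"
  proof -
    assume k3: "k \<ge> 3"
    have "k \<in> J \<or> k - 1 \<in> J" using cond kK by blast
    moreover have "(k-2)+2 = k" "(k-2)+1 = k-1" using k3 by auto
    ultimately have "(k-2)+2 \<in> J \<or> (k-2)+1 \<in> J" by simp
    then show ?thesis by (rule sd_two_ge)
  qed
  define T where "T = (if n = 0 then 0\<^sub>v (dE (k-2)) else Y (n-1) (k-2))"
  have T: "k \<ge> 3 \<Longrightarrow> T \<in> carrier_vec (dE (k-2)) \<and>
     g (k-2) *\<^sub>v T = (if n = 0 then 0\<^sub>v (dK (k-2)) else unit_vec (dK (k-2)) (n-1))"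
  proof -
    assume k3: "k \<ge> 3"
    have kk: "k-2 \<in> {1..t}" using k3 kt by auto
    show ?thesis
    proof (cases "n = 0")
      case True then show ?thesis using g_car[OF kk] by (simp add: T_def mat_zero_vec)
    next
      case False
      then have "good Y (n-1)" using all by simp
      then show ?thesis using False kk dK2[OF k3] unfolding good_def T_def by auto
    qed
  qed
  obtain z where z: "z \<in> carrier_vec (dE k)" "g k *\<^sub>v z = unit_vec (dK k) n" "3 \<le> k \<Longrightarrow> bE (k-2) *\<^sub>v z = T"
  proof -
    have kk: "k \<in> {1..t}" using k1 kt by auto
    obtain w where w: "w \<in> carrier_vec (dE k)" "g k *\<^sub>v w = unit_vec (dK k) n"
      using g_surj[OF kk, of "unit_vec (dK k) n"] by auto
    show ?thesis
    proof (cases "3 \<le> k")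
      case False then show ?thesis using that w by auto
    next
      case True
      define j where "j = k - 2"
      have j: "j \<in> {1..t-2}" "j \<in> {1..t}" and jk: "k = j + 2" using True kt by (auto simp: j_def)
      have bcar: "bE j \<in> carrier_mat (dE j) (dE k)" using bE_car[OF j(1)] jk by simp
      have gcar: "g j \<in> carrier_mat (dK j) (dE j)" using g_car[OF j(2)] .
      have gk: "g k \<in> carrier_mat (dK k) (dE k)" using g_car[OF kk] .
      have fk: "f k \<in> carrier_mat (dE k) (dJ k)" using f_car[OF kk] .
      have fj: "f j \<in> carrier_mat (dE j) (dJ j)" using f_car[OF j(2)] .
      have Tc: "T \<in> carrier_vec (dE j)" "g j *\<^sub>v T = (if n = 0 then 0\<^sub>v (dK j) else unit_vec (dK j) (n-1))"
        using T True by (auto simp: j_def)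
      define d where "d = bE j *\<^sub>v w - T"
      have bw: "bE j *\<^sub>v w \<in> carrier_vec (dE j)" using bcar w by simp
      have dcar: "d \<in> carrier_vec (dE j)" using bw Tc by (simp add: d_def)
      have "g j *\<^sub>v (bE j *\<^sub>v w) = (g j * bE j) *\<^sub>v w" using gcar bcar w by simp
      also have "\<dots> = (sh dK j * g k) *\<^sub>v w" using g_b[OF j(1)] jk by simp
      also have "\<dots> = sh dK j *\<^sub>v (g k *\<^sub>v w)" using gk w sh_car[of dK j] jk by (metis assoc_mult_mat_vec)
      also have "\<dots> = (if n = 0 then 0\<^sub>v (dK j) else unit_vec (dK j) (n-1))"
        using w(2) sh_unit[of n dK j] nk jk sd_two[OF Kst, of j] by simp
      finally have gbw: "g j *\<^sub>v (bE j *\<^sub>v w) = (if n = 0 then 0\<^sub>v (dK j) else unit_vec (dK j) (n-1))" .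
      have "g j *\<^sub>v d = g j *\<^sub>v (bE j *\<^sub>v w) - g j *\<^sub>v T"
        unfolding d_def using gcar bw Tc by (simp add: mult_minus_distrib_mat_vec)
      also have "\<dots> = 0\<^sub>v (dK j)" unfolding gbw Tc(2) by simp
      finally obtain u where u: "u \<in> carrier_vec (dJ j)" "f j *\<^sub>v u = d"
        using exact[OF j(2) dcar] by auto
      define m where "m = vec (dJ (j+2)) (\<lambda>r. if r = 0 then 0 else if r - 1 < dJ j then u $ (r-1) else (0::'a))"
      have mcar: "m \<in> carrier_vec (dJ k)" using jk by (simp add: m_def)
      have shm: "sh dJ j *\<^sub>v m = u" unfolding m_def using sh_surj[of dJ j u] dJ2 True u(1) jk by simp
      define z where "z = w - f k *\<^sub>v m"
      have fkm: "f k *\<^sub>v m \<in> carrier_vec (dE k)" using fk mcar by simp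
      have zc: "z \<in> carrier_vec (dE k)" using w fkm by (simp add: z_def)
      have "g k *\<^sub>v z = g k *\<^sub>v w - g k *\<^sub>v (f k *\<^sub>v m)"
        unfolding z_def using gk w fkm by (simp add: mult_minus_distrib_mat_vec)
      also have "\<dots> = unit_vec (dK k) n" using gf[OF kk mcar] w(2) by simp
      finally have gz: "g k *\<^sub>v z = unit_vec (dK k) n" .
      have "bE j *\<^sub>v (f k *\<^sub>v m) = (bE j * f k) *\<^sub>v m" using bcar fk mcar by simp
      also have "\<dots> = (f j * sh dJ j) *\<^sub>v m" using f_b[OF j(1)] jk by simp
      also have "\<dots> = f j *\<^sub>v (sh dJ j *\<^sub>v m)" using fj mcar sh_car[of dJ j] jk by (metis assoc_mult_mat_vec)
      also have "\<dots> = d" using shm u by simp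
      finally have bfm: "bE j *\<^sub>v (f k *\<^sub>v m) = d" .
      have "bE j *\<^sub>v z = bE j *\<^sub>v w - bE j *\<^sub>v (f k *\<^sub>v m)"
        unfolding z_def using bcar w fkm by (simp add: mult_minus_distrib_mat_vec)
      also have "\<dots> = T" unfolding bfm d_def using bw Tc(1) by (intro eq_vecI) auto
      finally have bz: "bE j *\<^sub>v z = T" .
      show ?thesis using that[OF zc gz] bz j_def by simp
    qed
  qed
  define W where "W i = itv aE k z (i - k)" for i
  have Wa: "\<And>i. k \<le> i \<Longrightarrow> aE i *\<^sub>v W i = W (i+1)"
    by (simp add: W_def Suc_diff_le)
  have main: "i \<le> t \<longrightarrow> W i \<in> carrier_vec (dE i) \<and> g i *\<^sub>v W i = unit_vec (dK i) n \<and>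
      (3 \<le> i \<longrightarrow> bE (i-2) *\<^sub>v W i = (if n = 0 then 0\<^sub>v (dE (i-2)) else Y (n-1) (i-2)))"
    if ki: "k \<le> i" for i
    using ki
  proof (induction i rule: dec_induct)
    case base
    then show ?case using z T_def by (simp add: W_def)
  next
    case (step i)
    show ?case
    proof
      assume it: "Suc i \<le> t"
      then have IH: "W i \<in> carrier_vec (dE i)" "g i *\<^sub>v W i = unit_vec (dK i) n"
         "3 \<le> i \<Longrightarrow> bE (i-2) *\<^sub>v W i = (if n = 0 then 0\<^sub>v (dE (i-2)) else Y (n-1) (i-2))"
        using step.IH by auto
      have ii: "i \<in> {1..t-1}" using it step.hyps k1 by auto
      have ac: "aE i \<in> carrier_mat (dE (i+1)) (dE i)" using aE_car[OF ii] .
      have WS: "W (Suc i) = aE i *\<^sub>v W i" using Wa[OF step.hyps(1)] by simp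
      have c1: "W (Suc i) \<in> carrier_vec (dE (Suc i))" using WS ac IH(1) by simp
      have gc: "g (i+1) \<in> carrier_mat (dK (i+1)) (dE (i+1))" using g_car ii by auto
      have "g (Suc i) *\<^sub>v W (Suc i) = (g (i+1) * aE i) *\<^sub>v W i" using WS gc ac IH(1) by simp
      also have "\<dots> = (inc dK i * g i) *\<^sub>v W i" using g_a[OF ii] by simp
      also have "\<dots> = inc dK i *\<^sub>v (g i *\<^sub>v W i)" using inc_car[of dK i] g_car[of i] ii IH(1)
        by (metis assoc_mult_mat_vec atLeastAtMost_iff diff_le_self le_trans)
      also have "\<dots> = unit_vec (dK (Suc i)) n" using IH(2) inc_unit[of n dK i] above step.hyps(1) by simp
      finally have c2: "g (Suc i) *\<^sub>v W (Suc i) = unit_vec (dK (Suc i)) n" .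
      have c3: "bE (Suc i - 2) *\<^sub>v W (Suc i) = (if n = 0 then 0\<^sub>v (dE (Suc i - 2)) else Y (n-1) (Suc i - 2))"
        if i3: "3 \<le> Suc i"
      proof (cases "i = 2")
        case True
        have n0: "n = 0" using n1k3 step.hyps(1) True by fastforce
        have "bE 1 *\<^sub>v (aE 2 *\<^sub>v W 2) = (bE 1 * aE 2) *\<^sub>v W 2"
        proof -
          have b1: "bE 1 \<in> carrier_mat (dE 1) (dE (1+2))" using bE_car[of 1] t3 by auto
          have a2: "aE 2 \<in> carrier_mat (dE (2+1)) (dE 2)" using aE_car[of 2] t3 by auto
          have e: "(1::nat)+2 = 2+1" by simp
          have w2: "W 2 \<in> carrier_vec (dE 2)" using IH(1) True by simp
          show ?thesis using assoc_mult_mat_vec[OF b1[unfolded e] a2 w2] by simp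
        qed
        also have "\<dots> = 0\<^sub>v (dE 1)" using rel1 IH(1) True zero_mat_vec by simp
        finally show ?thesis using WS True n0 by (simp add: numeral_2_eq_2)
      next
        case False
        define j where "j = i - 2"
        have ij: "i = j + 2" and j1: "j \<ge> 1" using i3 False by (auto simp: j_def)
        have jj: "j \<in> {1..t-3}" using ij j1 it by auto
        have b1: "bE (j+1) \<in> carrier_mat (dE (j+1)) (dE (j+3))" using bE_car[of "j+1"] jj by (auto simp: eval_nat_numeral)
        have a2: "aE (j+2) \<in> carrier_mat (dE (j+3)) (dE (j+2))" using aE_car[of "j+2"] jj by (auto simp: eval_nat_numeral)
        have aj: "aE j \<in> carrier_mat (dE (j+1)) (dE j)" using aE_car[of j] jj by auto
        have bj: "bE j \<in> carrier_mat (dE j) (dE (j+2))" using bE_car[of j] jj by auto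
        have Wc: "W (j+2) \<in> carrier_vec (dE (j+2))" using IH(1) ij by simp
        have "bE (Suc i - 2) *\<^sub>v W (Suc i) = bE (j+1) *\<^sub>v (aE (j+2) *\<^sub>v W (j+2))" using WS ij by simp
        also have "\<dots> = (bE (j+1) * aE (j+2)) *\<^sub>v W (j+2)" using b1 a2 Wc by simp
        also have "\<dots> = (aE j * bE j) *\<^sub>v W (j+2)" using rel2[OF jj] by simp
        also have "\<dots> = aE j *\<^sub>v (bE j *\<^sub>v W (j+2))" using aj bj Wc by simp
        also have "\<dots> = aE j *\<^sub>v (if n = 0 then 0\<^sub>v (dE j) else Y (n-1) j)" using ij j1 IH(3) by simp
        also have "\<dots> = (if n = 0 then 0\<^sub>v (dE (Suc i - 2)) else Y (n-1) (Suc i - 2))"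
        proof (cases "n = 0")
          case True then show ?thesis using aj ij by (simp add: mat_zero_vec)
        next
          case False
          have k3: "k \<ge> 3" using n1k3 False by simp
          have "good Y (n-1)" using all False by simp
          moreover have "j \<in> {1..t}" "j < t" using jj by auto
          moreover have "n - 1 < dK j" proof -
            have "k - 2 \<le> j" using step.hyps(1) ij by simp
            then have "dK (k-2) \<le> dK j" by (rule sd_mono)
            then show ?thesis using dK2[OF k3] False by simp
          qed
          ultimately show ?thesis using False ij unfolding good_def by auto
        qed
        finally show ?thesis .
      qed
      show "W (Suc i) \<in> carrier_vec (dE (Suc i)) \<and> g (Suc i) *\<^sub>v W (Suc i) = unit_vec (dK (Suc i)) n \<and>
        (3 \<le> Suc i \<longrightarrow> bE (Suc i - 2) *\<^sub>v W (Suc i) = (if n = 0 then 0\<^sub>v (dE (Suc i - 2)) else Y (n - 1) (Suc i - 2)))"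
        using c1 c2 c3 by blast
    qed
  qed
  have "good (Y(n := W)) n"
    unfolding good_def
  proof (intro ballI impI)
    fix i assume i: "i \<in> {1..t}" "n < dK i"
    have ki: "k \<le> i" using leastk[OF i(2)] .
    show "(Y(n := W)) n i \<in> carrier_vec (dE i) \<and> g i *\<^sub>v (Y(n := W)) n i = unit_vec (dK i) n \<and>
         (i < t \<longrightarrow> aE i *\<^sub>v (Y(n := W)) n i = (Y(n := W)) n (i + 1)) \<and>
         (3 \<le> i \<longrightarrow> bE (i - 2) *\<^sub>v (Y(n := W)) n i =
            (if n = 0 then 0\<^sub>v (dE (i - 2)) else (Y(n := W)) (n - 1) (i - 2)))"
      using main[OF ki] Wa[OF ki] i by auto
  qed
  then show ?thesis by blast
qed

lemma all_rows: "\<exists>Y. \<forall>c<n. good Y c"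
proof (induction n)
  case 0 then show ?case by simp
next
  case (Suc n)
  then obtain Y where Y: "\<forall>c<n. good Y c" by blast
  show ?case
  proof (cases "n < dK t")
    case True
    then obtain W where "good (Y(n := W)) n" using step Y by blast
    then have "\<forall>c<Suc n. good (Y(n := W)) c" using Y good_upd by (auto simp: less_Suc_eq)
    then show ?thesis by blast
  next
    case False
    have "good Y n" unfolding good_def
    proof (intro ballI impI)
      fix i assume i: "i \<in> {1..t}" "n < dK i"
      have "dK i \<le> dK t" using i(1) by (intro sd_mono) auto
      then show "Y n i \<in> carrier_vec (dE i) \<and> g i *\<^sub>v Y n i = unit_vec (dK i) n \<and>
         (i < t \<longrightarrow> aE i *\<^sub>v Y n i = Y n (i + 1)) \<and>
         (3 \<le> i \<longrightarrow> bE (i - 2) *\<^sub>v Y n i = (if n = 0 then 0\<^sub>v (dE (i - 2)) else Y (n - 1) (i - 2)))"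
        using False i(2) by simp
    qed
    then have "\<forall>c<Suc n. good Y c" using Y by (auto simp: less_Suc_eq)
    then show ?thesis by blast
  qed
qed

lemma section_exists:
  "\<exists>s. is_hom t (std_module K) (dE, aE, bE) s \<and> (\<forall>i\<in>{1..t}. g i * s i = 1\<^sub>m (dK i))"
proof -
  obtain Y where Y: "\<forall>c<dK t. good Y c" using all_rows by blast
  have G: "good Y c" if "c < dK i" "i \<in> {1..t}" for c i
  proof -
    have "dK i \<le> dK t" using that(2) by (intro sd_mono) auto
    then show ?thesis using Y that(1) by simp
  qed
  have P: "Y c i \<in> carrier_vec (dE i) \<and> g i *\<^sub>v Y c i = unit_vec (dK i) c \<and>
     (i < t \<longrightarrow> aE i *\<^sub>v Y c i = Y c (i+1)) \<and>
     (3 \<le> i \<longrightarrow> bE (i-2) *\<^sub>v Y c i = (if c = 0 then 0\<^sub>v (dE (i-2)) else Y (c-1) (i-2)))"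
    if "c < dK i" "i \<in> {1..t}" for c i
    using G[OF that] that unfolding good_def by blast
  define s where "s i = mat (dE i) (dK i) (\<lambda>(r,c). Y c i $ r)" for i
  have scar: "s i \<in> carrier_mat (dE i) (dK i)" for i by (simp add: s_def)
  have scol: "col (s i) c = Y c i" if "c < dK i" "i \<in> {1..t}" for c i
    unfolding s_def using P that by (intro cols_col) auto
  have sunit: "s i *\<^sub>v unit_vec (dK i) c = Y c i" if "c < dK i" "i \<in> {1..t}" for c i
    unfolding s_def using P that by (intro cols_unit) auto
  have hom_a: "s (i+1) * inc dK i = aE i * s i" if i: "i \<in> {1..t-1}" for i
  proof (rule mat_col_eqI)
    fix c assume c: "c < dim_col (aE i * s i)"
    then have c': "c < dK i" by (simp add: s_def)
    have i1: "i \<in> {1..t}" "i+1 \<in> {1..t}" using i by auto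
    have c'': "c < dK (i+1)" using c' sd_mono[of i "i+1" K] by simp
    have ci: "col (inc dK i :: 'a mat) c = unit_vec (dK (i+1)) c" using c' by (rule col_inc)
    have "col (s (i+1) * inc dK i) c = s (i+1) *\<^sub>v col (inc dK i) c"
      by (rule col_mult2[OF scar[of "i+1"] inc_car[of dK i] c'])
    also have "\<dots> = Y c (i+1)" using ci sunit[OF c'' i1(2)] by simp
    also have "\<dots> = aE i *\<^sub>v Y c i" using P[OF c' i1(1)] i by auto
    also have "\<dots> = col (aE i * s i) c" using scol[OF c' i1(1)] aE_car[OF i] scar c'
      by (metis col_mult2)
    finally show "col (s (i+1) * inc dK i) c = col (aE i * s i) c" .
  qed (use aE_car[OF i] in \<open>auto simp: s_def inc_def\<close>)
  have hom_b: "s j * sh dK j = bE j * s (j+2)" if j: "j \<in> {1..t-2}" for j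
  proof (rule mat_col_eqI)
    fix c assume c: "c < dim_col (bE j * s (j+2))"
    then have c': "c < dK (j+2)" by (simp add: s_def)
    have j1: "j \<in> {1..t}" "j+2 \<in> {1..t}" using j by auto
    have cs: "col (sh dK j :: 'a mat) c = (if c = 0 then 0\<^sub>v (dK j) else unit_vec (dK j) (c-1))"
      using c' by (rule col_sh)
    have "col (s j * sh dK j) c = s j *\<^sub>v col (sh dK j) c"
      by (rule col_mult2[OF scar[of j] sh_car[of dK j] c'])
    also have "\<dots> = (if c = 0 then 0\<^sub>v (dE j) else Y (c-1) j)"
    proof (cases "c = 0")
      case True then show ?thesis using cs scar by (simp add: mat_zero_vec)
    next
      case False
      have "c - 1 < dK j" using c' sd_two[OF Kst, of j] False by simp
      then show ?thesis using cs False sunit j1 by simp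
    qed
    also have "\<dots> = bE j *\<^sub>v Y c (j+2)"
    proof -
      have j3: "3 \<le> j + 2" using j by auto
      have e: "j + 2 - 2 = j" by (rule diff_add_inverse2)
      have "bE (j+2-2) *\<^sub>v Y c (j+2) = (if c = 0 then 0\<^sub>v (dE (j+2-2)) else Y (c-1) (j+2-2))"
        using P[OF c' j1(2)] j3 by blast
      then show ?thesis unfolding e by simp
    qed
    also have "\<dots> = col (bE j * s (j+2)) c" using scol[OF c' j1(2)] bE_car[OF j] scar c'
      by (metis col_mult2)
    finally show "col (s j * sh dK j) c = col (bE j * s (j+2)) c" .
  qed (use bE_car[OF j] in \<open>auto simp: s_def sh_def\<close>)
  have "is_hom t (std_module K) (dE, aE, bE) s"
    unfolding std_module_eq is_hom_def using scar hom_a hom_b by auto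
  moreover have "g i * s i = 1\<^sub>m (dK i)" if i: "i \<in> {1..t}" for i
  proof (rule mat_col_eqI)
    fix c assume c: "c < dim_col (1\<^sub>m (dK i) :: 'a mat)"
    then have c': "c < dK i" by simp
    have "col (g i * s i) c = g i *\<^sub>v Y c i" using scol[OF c' i] g_car[OF i] scar c'
      by (metis col_mult2)
    also have "\<dots> = col (1\<^sub>m (dK i)) c" using P[OF c' i] c' by simp
    finally show "col (g i * s i) c = col (1\<^sub>m (dK i)) c" .
  qed (use g_car[OF i] in \<open>auto simp: s_def\<close>)
  ultimately show ?thesis by blast
qed

end

theorem lemma2p6:
  fixes t :: nat and J K :: "nat set"
  assumes "alg_closed_field TYPE('a::field)"
    and "t \<ge> 3"
    and "standard_subset t J" and "J \<noteq> {}"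
    and "standard_subset t K" and "K \<noteq> {}"
    and "\<forall>i\<in>K. i \<in> J \<or> i - 1 \<in> J"
  shows "ext1_zero t (std_module K :: 'a rep) (std_module J)"
  unfolding ext1_zero_def
proof (intro allI impI)
  fix E :: "'a rep" and f g
  assume H: "is_rep t E \<and> short_exact t (std_module J) E (std_module K) f g"
  obtain dE aE bE where E: "E = (dE, aE, bE)" by (cases E) auto
  interpret ctx t J K dE aE bE f g
    using H assms unfolding E by unfold_locales auto
  show "\<exists>s. is_hom t (std_module K) E s \<and> (\<forall>i\<in>{1..t}. g i * s i = 1\<^sub>m (fst (std_module K :: 'a rep) i))"
    using section_exists unfolding E by (simp add: std_module_eq)
qed

end
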